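(* Let $n \geq 2$, let $A \in \mathbb{R}^{n\times n}$ be symmetric, $b \in \mathbb{R}^n$, $c \in \mathbb{R}$, and let $C = \begin{pmatrix} A & b \\ b^\top & c \end{pmatrix}$. For $p \geq 2$, consider the problem \[ \min_{Y_1 \in \mathbb{R}^{n\times p},\, y_2 \in \mathbb{R}^p} \langle CY, Y\rangle \quad \text{subject to} \quad \|Y_1\|^2 = 1,\ \|y_2\|^2 = 1, \qquad \text{with } Y = \begin{pmatrix} Y_1 \\ y_2^\top \end{pmatrix} \in \mathbb{R}^{(n+1)\times p}. \] Then every second-order critical point of this problem is globally optimal (for all $A, b, c$).
   Context: This problem is the Burer--Monteiro factorization at rank $p$ of the SDP relaxation of the trust-region subproblem $\min_{x\in\mathbb{R}^n} x^\top A x + 2b^\top x + c$ s.t. $\|x\|^2 = 1$, namely $\min_{X} \langle C, X\rangle$ s.t. $\mathrm{trace}(X_{1:n,1:n}) = 1$, $X_{n+1,n+1} = 1$, $X \succeq 0$ (symmetric $X$ of size $n+1$), where $X = YY^\top$. Here $\langle U, V\rangle = \mathrm{trace}(U^\top V)$ and $\|\cdot\|$ is the Frobenius norm (2-norm for vectors). The feasible set $\mathcal{M} = \{Y : \|Y_1\|^2 = 1, \|y_2\|^2 = 1\}$ is a smooth submanifold of $\mathbb{R}^{(n+1)\times p}$, and with cost $g(Y) = \langle CY, Y\rangle$, a point $Y \in \mathcal{M}$ is second-order critical if its Riemannian gradient vanishes and its Riemannian Hessian is positive semidefinite on the tangent space. Globally optimal points $Y$ map to globally optimal $X = YY^\top$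 of the SDP. *)

theory Defs
  imports "HOL-Analysis.Analysis"
begin

text \<open>Matrices in R^((n+1) x p) are represented as real^'p::finite^('n::finite + unit):
  rows Inl i (i :: 'n) form the block Y1, the row Inr () is y2^T.
  The inner product on real^'p::finite^'m is the Frobenius inner product trace(U^T V).\<close>

definition blockC :: "real^'n::finite^'n \<Rightarrow> real^'n \<Rightarrow> real \<Rightarrow> real^('n::finite + unit)^('n::finite + unit)" where
  "blockC A b c = (\<chi> r s. (case r of
      Inl i \<Rightarrow> (case s of Inl j \<Rightarrow> A $ i $ j | Inr _ \<Rightarrow> b $ i)
    | Inr _ \<Rightarrow> (case s of Inl j \<Rightarrow> b $ j | Inr _ \<Rightarrow> c)))"

definition blk1_inner :: "real^'p::finite^('n::finite + unit) \<Rightarrow> real^'p::finite^('n::finite + unit) \<Rightarrow> real" where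
  "blk1_inner Y V = (\<Sum>i\<in>UNIV. (Y $ Inl i) \<bullet> (V $ Inl i))"

definition blk2_inner :: "real^'p::finite^('n::finite + unit) \<Rightarrow> real^'p::finite^('n::finite + unit) \<Rightarrow> real" where
  "blk2_inner Y V = (Y $ Inr ()) \<bullet> (V $ Inr ())"

definition BMmanifold :: "(real^'p::finite^('n::finite + unit)) set" where
  "BMmanifold = {Y. blk1_inner Y Y = 1 \<and> blk2_inner Y Y = 1}"

definition tangent_space :: "real^'p::finite^('n::finite + unit) \<Rightarrow> (real^'p::finite^('n::finite + unit)) set" where
  "tangent_space Y = {V. blk1_inner Y V = 0 \<and> blk2_inner Y V = 0}"

definition proj_tangent :: "real^'p::finite^('n::finite + unit) \<Rightarrow> real^'p::finite^('n::finite + unit) \<Rightarrow> real^'p::finite^('n::finite + unit)" where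
  "proj_tangent Y V = (\<chi> r. case r of
      Inl _ \<Rightarrow> V $ r - blk1_inner Y V *\<^sub>R Y $ r
    | Inr _ \<Rightarrow> V $ r - blk2_inner Y V *\<^sub>R Y $ r)"

definition bm_cost :: "real^('n::finite + unit)^('n::finite + unit) \<Rightarrow> real^'p::finite^('n::finite + unit) \<Rightarrow> real" where
  "bm_cost C Y = (C ** Y) \<bullet> Y"

definition egrad :: "real^('n::finite + unit)^('n::finite + unit) \<Rightarrow> real^'p::finite^('n::finite + unit) \<Rightarrow> real^'p::finite^('n::finite + unit)" where
  "egrad C Y = 2 *\<^sub>R (C ** Y)"

definition ehess :: "real^('n::finite + unit)^('n::finite + unit) \<Rightarrow> real^'p::finite^('n::finite + unit) \<Rightarrow> real^'p::finite^('n::finite + unit)" where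
  "ehess C V = 2 *\<^sub>R (C ** V)"

definition rgrad :: "real^('n::finite + unit)^('n::finite + unit) \<Rightarrow> real^'p::finite^('n::finite + unit) \<Rightarrow> real^'p::finite^('n::finite + unit)" where
  "rgrad C Y = proj_tangent Y (egrad C Y)"

text \<open>Riemannian Hessian on the product of spheres (embedded submanifold, Weingarten term):
  Hess g(Y)[V] = Proj_Y(ehess[V]) - (<Y1,G1> V1 ; <y2,g2> v2^T), with G = egrad C Y.\<close>
definition rhess :: "real^('n::finite + unit)^('n::finite + unit) \<Rightarrow> real^'p::finite^('n::finite + unit) \<Rightarrow> real^'p::finite^('n::finite + unit) \<Rightarrow> real^'p::finite^('n::finite + unit)" where
  "rhess C Y V = proj_tangent Y (ehess C V) -
     (\<chi> r. case r of
        Inl _ \<Rightarrow> blk1_inner Y (egrad C Y) *\<^sub>R V $ r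
      | Inr _ \<Rightarrow> blk2_inner Y (egrad C Y) *\<^sub>R V $ r)"

definition second_order_critical :: "real^('n::finite + unit)^('n::finite + unit) \<Rightarrow> real^'p::finite^('n::finite + unit) \<Rightarrow> bool" where
  "second_order_critical C Y \<longleftrightarrow> Y \<in> BMmanifold \<and> rgrad C Y = 0 \<and>
     (\<forall>V\<in>tangent_space Y. V \<bullet> rhess C Y V \<ge> 0)"

definition globally_optimal :: "real^('n::finite + unit)^('n + unit) \<Rightarrow> real^'p::finite^('n + unit) \<Rightarrow> bool" where
  "globally_optimal C Y \<longleftrightarrow> Y \<in> BMmanifold \<and> (\<forall>Z\<in>(BMmanifold :: (real^'p^('n + unit)) set). bm_cost C Y \<le> bm_cost C Z)"

end

theory Submission
  imports Defs
begin

lemma sum_UNIV_plus_unit: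
  "sum f (UNIV :: ('a::finite + unit) set) = (\<Sum>i\<in>UNIV. f (Inl i)) + f (Inr ())"
proof -
  have "sum f (UNIV :: ('a + unit) set) = sum f (UNIV <+> UNIV)" by simp
  also have "\<dots> = sum (f \<circ> Inl) UNIV + sum (f \<circ> Inr) (UNIV::unit set)"
    by (rule sum.Plus) auto
  finally show ?thesis by (simp add: UNIV_unit)
qed

lemma inner_split:
  fixes V W :: "real^'p::finite^('n::finite + unit)"
  shows "V \<bullet> W = blk1_inner V W + blk2_inner V W"
  by (simp add: inner_vec_def[of V W] sum_UNIV_plus_unit blk1_inner_def blk2_inner_def)

lemma blk1_scale: "blk1_inner Y (a *\<^sub>R X) = a * blk1_inner Y X"
  by (simp add: blk1_inner_def sum_distrib_left)

lemma blk2_scale: "blk2_inner Y (a *\<^sub>R X) = a * blk2_inner Y X"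
  by (simp add: blk2_inner_def)

lemma blk1_comm: "blk1_inner Y X = blk1_inner X Y"
  by (simp add: blk1_inner_def inner_commute)

lemma blk2_comm: "blk2_inner Y X = blk2_inner X Y"
  by (simp add: blk2_inner_def inner_commute)

lemma inner_proj:
  fixes V W Y :: "real^'p::finite^('n::finite + unit)"
  shows "V \<bullet> proj_tangent Y W = V \<bullet> W - blk1_inner Y W * blk1_inner Y V - blk2_inner Y W * blk2_inner Y V"
proof -
  have "V \<bullet> proj_tangent Y W = blk1_inner V (proj_tangent Y W) + blk2_inner V (proj_tangent Y W)"
    by (rule inner_split)
  also have "blk1_inner V (proj_tangent Y W) = blk1_inner V W - blk1_inner Y W * blk1_inner Y V"
    by (simp add: blk1_inner_def proj_tangent_def inner_diff_right sum_subtractf sum_distrib_left inner_commute)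
  also have "blk2_inner V (proj_tangent Y W) = blk2_inner V W - blk2_inner Y W * blk2_inner Y V"
    by (simp add: blk2_inner_def proj_tangent_def inner_diff_right inner_commute)
  finally show ?thesis using inner_split[of V W] by simp
qed

lemma inner_weight:
  fixes V :: "real^'p::finite^('n::finite + unit)"
  shows "V \<bullet> (\<chi> r. case r of Inl _ \<Rightarrow> a *\<^sub>R V $ r | Inr _ \<Rightarrow> b *\<^sub>R V $ r)
     = a * blk1_inner V V + b * blk2_inner V V"
  by (simp add: inner_vec_def[of V] sum_UNIV_plus_unit blk1_inner_def blk2_inner_def sum_distrib_left)


definition mu :: "real^('n::finite + unit)^('n + unit) \<Rightarrow> real^'p::finite^('n + unit) \<Rightarrow> ('n + unit) \<Rightarrow> real" where
  "mu C Y r = (case r of Inl _ \<Rightarrow> blk1_inner Y (C ** Y) | Inr _ \<Rightarrow> blk2_inner Y (C ** Y))"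

definition Sm :: "real^('n::finite + unit)^('n + unit) \<Rightarrow> real^'p::finite^('n + unit) \<Rightarrow> ('n + unit) \<Rightarrow> ('n + unit) \<Rightarrow> real" where
  "Sm C Y r s = C $ r $ s - (if r = s then mu C Y r else 0)"

definition Bf :: "real^('n::finite + unit)^('n + unit) \<Rightarrow> real^'p::finite^('n + unit) \<Rightarrow> real^'p^('n + unit) \<Rightarrow> real^'p^('n + unit) \<Rightarrow> real" where
  "Bf C Y X W = (\<Sum>k\<in>UNIV. \<Sum>r\<in>UNIV. \<Sum>s\<in>UNIV. Sm C Y r s * X $ s $ k * W $ r $ k)"

definition qf :: "real^('n::finite + unit)^('n + unit) \<Rightarrow> real^'p::finite^('n + unit) \<Rightarrow> real^('n + unit) \<Rightarrow> real" where
  "qf C Y u = (\<Sum>r\<in>UNIV. \<Sum>s\<in>UNIV. Sm C Y r s * u $ s * u $ r)"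

lemma wmu:
  fixes V W :: "real^'p::finite^('n::finite + unit)"
  shows "(\<Sum>r\<in>UNIV. mu C Y r * (V $ r \<bullet> W $ r)) =
    blk1_inner Y (C ** Y) * blk1_inner V W + blk2_inner Y (C ** Y) * blk2_inner V W"
  by (simp add: sum_UNIV_plus_unit mu_def blk1_inner_def blk2_inner_def sum_distrib_left)

lemma Sm_sum: "(\<Sum>s\<in>UNIV. Sm C Y r s * X $ s $ k) = (C ** X) $ r $ k - mu C Y r * X $ r $ k"
proof -
  have "(\<Sum>s\<in>UNIV. Sm C Y r s * X $ s $ k) =
     (\<Sum>s\<in>UNIV. C $ r $ s * X $ s $ k) - (\<Sum>s\<in>UNIV. (if r = s then mu C Y r * X $ s $ k else 0))"
  proof -
    have "\<And>s. Sm C Y r s * X $ s $ k = C $ r $ s * X $ s $ k - (if r = s then mu C Y r * X $ s $ k else 0)"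
      by (simp add: Sm_def left_diff_distrib)
    then show ?thesis by (simp add: sum_subtractf)
  qed
  also have "\<dots> = (C ** X) $ r $ k - mu C Y r * X $ r $ k"
    by (simp add: matrix_matrix_mult_def)
  finally show ?thesis .
qed

lemma Bf_alt: "Bf C Y X W = (\<Sum>k\<in>UNIV. \<Sum>r\<in>UNIV. ((C ** X) $ r $ k - mu C Y r * X $ r $ k) * W $ r $ k)"
  unfolding Bf_def by (simp add: Sm_sum[symmetric] sum_distrib_right)

lemma Bf_link:
  "Bf C Y V V = V \<bullet> (C ** V) - (blk1_inner Y (C ** Y) * blk1_inner V V + blk2_inner Y (C ** Y) * blk2_inner V V)"
proof -
  have "Bf C Y V V = (\<Sum>r\<in>UNIV. \<Sum>k\<in>UNIV. ((C ** V) $ r $ k - mu C Y r * V $ r $ k) * V $ r $ k)"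
    unfolding Bf_alt by (rule sum.swap)
  also have "\<dots> = (\<Sum>r\<in>UNIV. V $ r \<bullet> (C ** V) $ r) - (\<Sum>r\<in>UNIV. mu C Y r * (V $ r \<bullet> V $ r))"
    by (simp add: inner_vec_def left_diff_distrib sum_subtractf sum_distrib_left algebra_simps)
  also have "(\<Sum>r\<in>UNIV. V $ r \<bullet> (C ** V) $ r) = V \<bullet> (C ** V)"
    by (simp add: inner_vec_def[of V])
  finally show ?thesis by (simp add: wmu)
qed


lemma Sm_sym: "(\<And>r s. C $ r $ s = C $ s $ r) \<Longrightarrow> Sm C Y r s = Sm C Y s r"
  by (auto simp: Sm_def)

lemma Bf_sym:
  assumes "\<And>r s. C $ r $ s = C $ s $ r"
  shows "Bf C Y X W = Bf C Y W X"
proof -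
  have "Bf C Y X W = (\<Sum>k\<in>UNIV. \<Sum>s\<in>UNIV. \<Sum>r\<in>UNIV. Sm C Y r s * X $ s $ k * W $ r $ k)"
    unfolding Bf_def by (intro sum.cong refl sum.swap)
  also have "\<dots> = Bf C Y W X"
  proof -
    have sy: "\<And>r s. Sm C Y r s = Sm C Y s r" using assms by (simp add: Sm_def)
    show ?thesis unfolding Bf_def by (intro sum.cong refl) (metis sy mult.commute mult.assoc)
  qed
  finally show ?thesis .
qed

lemma Bf_zero:
  assumes "\<And>r. (C ** Y) $ r = mu C Y r *\<^sub>R Y $ r"
  shows "Bf C Y Y W = 0"
  unfolding Bf_alt by (simp add: assms)

lemma Bf_expand:
  "Bf C Y (U - t *\<^sub>R Z) (U - t *\<^sub>R Z) = Bf C Y U U - t * Bf C Y Z U - t * Bf C Y U Z + t^2 * Bf C Y Z Z"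
proof -
  have pt: "\<And>k r s. Sm C Y r s * (U - t *\<^sub>R Z) $ s $ k * (U - t *\<^sub>R Z) $ r $ k =
     Sm C Y r s * U $ s $ k * U $ r $ k - t * (Sm C Y r s * Z $ s $ k * U $ r $ k)
     - t * (Sm C Y r s * U $ s $ k * Z $ r $ k) + t^2 * (Sm C Y r s * Z $ s $ k * Z $ r $ k)"
    by (simp add: algebra_simps power2_eq_square)
  show ?thesis
    unfolding Bf_def pt
    by (simp only: sum.distrib sum_subtractf sum_distrib_left[symmetric])
qed

lemma Bf_rank1:
  fixes u :: "real^('n::finite + unit)" and z :: "real^'p::finite"
  shows "Bf C Y (\<chi> s. u $ s *\<^sub>R z) (\<chi> s. u $ s *\<^sub>R z) = (z \<bullet> z) * qf C Y u"
proof -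
  have "Bf C Y (\<chi> s. u $ s *\<^sub>R z) (\<chi> s. u $ s *\<^sub>R z) = (\<Sum>k\<in>UNIV. (z $ k * z $ k) * qf C Y u)"
    unfolding Bf_def qf_def by (simp add: sum_distrib_left mult_ac)
  then show ?thesis by (simp add: inner_vec_def sum_distrib_right)
qed

lemma Bf_cols:
  "Bf C Y Z Z = (\<Sum>k\<in>UNIV. qf C Y (\<chi> r. Z $ r $ k))"
  unfolding Bf_def qf_def by simp


lemma rhess_link:
  assumes "V \<in> tangent_space Y"
  shows "V \<bullet> rhess C Y V = 2 * Bf C Y V V"
proof -
  have t: "blk1_inner Y V = 0" "blk2_inner Y V = 0" using assms by (auto simp: tangent_space_def)
  have "V \<bullet> rhess C Y V = V \<bullet> proj_tangent Y (ehess C V) -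
     (blk1_inner Y (egrad C Y) * blk1_inner V V + blk2_inner Y (egrad C Y) * blk2_inner V V)"
    unfolding rhess_def inner_diff_right inner_weight ..
  also have "\<dots> = 2 * (V \<bullet> (C ** V)) - 2 * (blk1_inner Y (C ** Y) * blk1_inner V V + blk2_inner Y (C ** Y) * blk2_inner V V)"
    by (simp add: inner_proj t ehess_def egrad_def blk1_scale blk2_scale algebra_simps)
  also have "\<dots> = 2 * Bf C Y V V" by (simp add: Bf_link)
  finally show ?thesis .
qed

lemma grad_cond:
  assumes "rgrad C Y = 0"
  shows "(C ** Y) $ r = mu C Y r *\<^sub>R Y $ r"
proof -
  have "rgrad C Y $ r = 0" using assms by simp
  then show ?thesis
    apply (cases r) apply (auto simp: rgrad_def proj_tangent_def egrad_def blk1_scale blk2_scale mu_def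
        algebra_simps scaleR_diff_right)
      by (metis scaleR_scaleR scaleR_cancel_left zero_neq_numeral)+
qed

lemma blockC_sym:
  assumes "transpose A = A"
  shows "blockC A b c $ r $ s = blockC A b c $ s $ r"
proof -
  have "A $ i $ j = A $ j $ i" for i j
  proof -
    have "A $ j $ i = transpose A $ i $ j" by (simp add: transpose_def)
    then show ?thesis using assms by simp
  qed
  then show ?thesis by (auto simp: blockC_def split: sum.splits)
qed


lemma exists_orth:
  fixes w :: "real^'p::finite"
  assumes "CARD('p) \<ge> 2"
  shows "\<exists>z. z \<noteq> 0 \<and> w \<bullet> z = 0"
proof -
  obtain a b :: 'p where ab: "a \<noteq> b"
  proof -
    have "\<not> (\<forall>x y::'p. x = y)"
    proof
      assume "\<forall>x y::'p. x = y"
      then have "card (UNIV::'p set) \<le> 1" by (metis card_le_Suc0_iff_eq finite One_nat_def)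
      then show False using assms by simp
    qed
    then show ?thesis using that by blast
  qed
  show ?thesis
  proof (cases "w $ a = 0 \<and> w $ b = 0")
    case True
    then show ?thesis
      by (intro exI[of _ "axis a 1"]) (simp add: inner_axis axis_eq_0_iff)
  next
    case False
    let ?z = "w $ b *\<^sub>R axis a (1::real) - w $ a *\<^sub>R axis b 1"
    have c: "?z $ a = w $ b" "?z $ b = - w $ a" using ab by (auto simp: axis_def)
    have "?z \<noteq> 0"
    proof
      assume "?z = 0"
      then have "?z $ a = 0" "?z $ b = 0" by simp_all
      then show False using c False by simp
    qed
    moreover have "w \<bullet> ?z = 0" by (simp add: inner_diff_right inner_axis)
    ultimately show ?thesis by blast
  qed
qed

theorem corollary5:
  fixes A :: "real^'n^'n" and b :: "real^'n" and c :: real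
    and Y :: "real^'p^('n + unit)"
  assumes "CARD('n) \<ge> 2" and "CARD('p) \<ge> 2"
    and "transpose A = A"
    and "second_order_critical (blockC A b c) Y"
  shows "globally_optimal (blockC A b c) Y"
proof -
  let ?C = "blockC A b c"
  have YM: "Y \<in> BMmanifold" and gr: "rgrad ?C Y = 0"
    and hs: "\<And>V. V \<in> tangent_space Y \<Longrightarrow> V \<bullet> rhess ?C Y V \<ge> 0"
    using assms(4) by (auto simp: second_order_critical_def)
  have Y11: "blk1_inner Y Y = 1" and Y22: "blk2_inner Y Y = 1" using YM by (auto simp: BMmanifold_def)
  have sym: "\<And>r s. ?C $ r $ s = ?C $ s $ r" using blockC_sym[OF assms(3)] by blast
  have g: "\<And>r. (?C ** Y) $ r = mu ?C Y r *\<^sub>R Y $ r" using grad_cond[OF gr] by blast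
  have z1: "\<And>W. Bf ?C Y Y W = 0" by (rule Bf_zero[OF g])
  have z2: "\<And>W. Bf ?C Y W Y = 0" using z1 Bf_sym[OF sym] by metis
  have psd: "qf ?C Y u \<ge> 0" for u :: "real^('n + unit)"
  proof -
    define w where "w = (\<Sum>i\<in>UNIV. u $ Inl i *\<^sub>R Y $ Inl i) - u $ Inr () *\<^sub>R Y $ Inr ()"
    obtain z where z: "z \<noteq> 0" "w \<bullet> z = 0" using exists_orth[OF assms(2)] by blast
    define t where "t = u $ Inr () * (Y $ Inr () \<bullet> z)"
    define U :: "real^'p^('n + unit)" where "U = (\<chi> s. u $ s *\<^sub>R z)"
    define V where "V = U - t *\<^sub>R Y"
    have wz: "(\<Sum>i\<in>UNIV. u $ Inl i * (Y $ Inl i \<bullet> z)) = t"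
      using z(2) unfolding w_def t_def
      by (simp add: inner_diff_left inner_sum_left)
    have "blk1_inner Y V = (\<Sum>i\<in>UNIV. u $ Inl i * (Y $ Inl i \<bullet> z)) - t * blk1_inner Y Y"
      by (simp add: V_def U_def blk1_inner_def inner_diff_right sum_subtractf sum_distrib_left)
    then have b1: "blk1_inner Y V = 0" using wz Y11 by simp
    have "blk2_inner Y V = u $ Inr () * (Y $ Inr () \<bullet> z) - t * blk2_inner Y Y"
      by (simp add: V_def U_def blk2_inner_def inner_diff_right)
    then have b2: "blk2_inner Y V = 0" using Y22 t_def by simp
    have "V \<in> tangent_space Y" using b1 b2 by (simp add: tangent_space_def)
    then have "0 \<le> 2 * Bf ?C Y V V" using hs rhess_link by metis
    also have "Bf ?C Y V V = (z \<bullet> z) * qf ?C Y u"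
      unfolding V_def Bf_expand z1 z2 using Bf_rank1 U_def by simp
    finally have "0 \<le> (z \<bullet> z) * qf ?C Y u" by simp
    moreover have "z \<bullet> z > 0" using z(1) by simp
    ultimately show ?thesis by (simp add: zero_le_mult_iff)
  qed
  have cost: "bm_cost ?C Z = Bf ?C Y Z Z + (blk1_inner Y (?C ** Y) * blk1_inner Z Z + blk2_inner Y (?C ** Y) * blk2_inner Z Z)"
    for Z :: "real^'p^('n + unit)"
    by (simp add: Bf_link bm_cost_def inner_commute)
  show ?thesis unfolding globally_optimal_def
  proof (intro conjI ballI YM)
    fix Z :: "real^'p^('n + unit)" assume "Z \<in> BMmanifold"
    then have "blk1_inner Z Z = 1" "blk2_inner Z Z = 1" by (auto simp: BMmanifold_def)
    moreover have "Bf ?C Y Z Z \<ge> 0" unfolding Bf_cols by (intro sum_nonneg psd)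
    ultimately show "bm_cost ?C Y \<le> bm_cost ?C Z"
      using cost[of Y] cost[of Z] z1 Y11 Y22 by simp
  qed
qed

end
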